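(* If $G_1$ and $G_2$ admit uniform WIASIs, then the cartesian product $G_1\times G_2$ admits a uniform WIASI and $\varphi(G_1\times G_2)=0$.
   Context: All graphs are finite, simple and without isolated vertices. $\mathbb{N}_0$ denotes the set of non-negative integers; for finite $A,B\subseteq\mathbb{N}_0$, $A+B=\{a+b: a\in A, b\in B\}$. An integer additive set-indexer (IASI) of a graph $G$ is an injective map $f$ from $V(G)$ to the finite non-empty subsets of $\mathbb{N}_0$ such that the induced edge map $f^+(uv)=f(u)+f(v)$ is injective on $E(G)$. A weak IASI (WIASI) is an IASI $f$ with $|f^+(uv)|=\max(|f(u)|,|f(v)|)$ for every edge $uv$ (equivalently, for every edge at least one end vertex has a singleton label). A vertex or edge is mono-indexed if its set-label has cardinality $1$. Every graph admits a WIASI. The sparing number $\varphi(G)$ is the minimum, over all WIASIs of $G$, of the number of mono-indexed edges of $G$. For an integer $k\ge 2$, a WIASI $f$ is $k$-uniform if $|f^+(e)|=k$ for every edge $e$; $G$ admits a uniform WIASI (UWIASI) if it admits a $k$-uniform WIASI for some integer $k\ge 2$. The cartesian product $G_1\times G_2$ has vertex set $V(G_1)\times V(G_2)$, with $(a,b)$ adjacent to $(a',b')$ iff either $a=a'$ and $bb'\in E(G_2)$, or $b=b'$ and $aa'\in E(G_1)$. *)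

theory Defs
  imports Main "HOL-Library.Set_Algebras"
begin

definition graph :: "'a set \<Rightarrow> 'a set set \<Rightarrow> bool" where
  "graph V E \<longleftrightarrow> finite V \<and>
     (\<forall>e\<in>E. \<exists>u v. u \<noteq> v \<and> u \<in> V \<and> v \<in> V \<and> e = {u, v}) \<and>
     (\<forall>v\<in>V. \<exists>e\<in>E. v \<in> e)"

definition edge_label :: "('a \<Rightarrow> nat set) \<Rightarrow> 'a \<Rightarrow> 'a \<Rightarrow> nat set" where
  "edge_label f u v = f u + f v"

definition iasi :: "'a set \<Rightarrow> 'a set set \<Rightarrow> ('a \<Rightarrow> nat set) \<Rightarrow> bool" where
  "iasi V E f \<longleftrightarrow>
     (\<forall>v\<in>V. finite (f v) \<and> f v \<noteq> {}) \<and> inj_on f V \<and>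
     (\<forall>u v u' v'. {u, v} \<in> E \<longrightarrow> {u', v'} \<in> E \<longrightarrow>
        edge_label f u v = edge_label f u' v' \<longrightarrow> {u, v} = {u', v'})"

definition wiasi :: "'a set \<Rightarrow> 'a set set \<Rightarrow> ('a \<Rightarrow> nat set) \<Rightarrow> bool" where
  "wiasi V E f \<longleftrightarrow> iasi V E f \<and>
     (\<forall>u v. {u, v} \<in> E \<longrightarrow> card (edge_label f u v) = max (card (f u)) (card (f v)))"

definition mono_edges :: "'a set set \<Rightarrow> ('a \<Rightarrow> nat set) \<Rightarrow> nat" where
  "mono_edges E f = card {e \<in> E. \<exists>u v. e = {u, v} \<and> card (edge_label f u v) = 1}"

definition sparing_number :: "'a set \<Rightarrow> 'a set set \<Rightarrow> nat" where
  "sparing_number V E = (LEAST n. \<exists>f. wiasi V E f \<and> mono_edges E f = n)"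

definition k_uniform_wiasi :: "nat \<Rightarrow> 'a set \<Rightarrow> 'a set set \<Rightarrow> ('a \<Rightarrow> nat set) \<Rightarrow> bool" where
  "k_uniform_wiasi k V E f \<longleftrightarrow> wiasi V E f \<and>
     (\<forall>u v. {u, v} \<in> E \<longrightarrow> card (edge_label f u v) = k)"

definition admits_uwiasi :: "'a set \<Rightarrow> 'a set set \<Rightarrow> bool" where
  "admits_uwiasi V E \<longleftrightarrow> (\<exists>k\<ge>2. \<exists>f. k_uniform_wiasi k V E f)"

definition cart_edges :: "'a set \<Rightarrow> 'a set set \<Rightarrow> 'b set \<Rightarrow> 'b set set \<Rightarrow> ('a \<times> 'b) set set" where
  "cart_edges V1 E1 V2 E2 =
     {{(a, b), (a, b')} | a b b'. a \<in> V1 \<and> {b, b'} \<in> E2} \<union>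
     {{(a, b), (a', b)} | a a' b. b \<in> V2 \<and> {a, a'} \<in> E1}"

end

theory Submission
  imports Defs
begin

lemma finite_sumset: "finite (A::nat set) \<Longrightarrow> finite B \<Longrightarrow> finite (A + B)"
proof -
  assume "finite A" "finite B"
  have "A + B = (\<lambda>(a,b). a + b) ` (A \<times> B)" by (auto simp: set_plus_def)
  thus ?thesis using \<open>finite A\<close> \<open>finite B\<close> by simp
qed

lemma sumset_gt:
  fixes A B :: "nat set"
  assumes "finite A" "finite B" "card A \<ge> 2" "card B \<ge> 2"
  shows "card (A + B) > card B"
proof -
  have neA: "A \<noteq> {}" and neB: "B \<noteq> {}" using assms by auto
  define a1 where "a1 = Min A"
  define a2 where "a2 = Max A"
  define b2 where "b2 = Max B"
  have a1A: "a1 \<in> A" and a2A: "a2 \<in> A" using assms neA by (auto simp: a1_def a2_def)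
  have b2B: "b2 \<in> B" using assms neB by (auto simp: b2_def)
  have "a1 \<noteq> a2"
  proof
    assume "a1 = a2"
    have "\<forall>x\<in>A. x = a1"
    proof
      fix x assume "x \<in> A"
      hence "a1 \<le> x" "x \<le> a2" using assms(1) a1_def a2_def by auto
      thus "x = a1" using \<open>a1 = a2\<close> by simp
    qed
    hence "A \<subseteq> {a1}" by auto
    hence "card A \<le> card {a1}" by (intro card_mono) auto
    hence "card A \<le> 1" by simp
    thus False using assms by simp
  qed
  moreover have "a1 \<le> a2" using assms(1) a2A a1_def by auto
  ultimately have lt: "a1 < a2" by simp
  have sub: "insert (a2 + b2) ((+) a1 ` B) \<subseteq> A + B"
    using a1A a2A b2B by (auto simp: set_plus_def)
  have notin: "a2 + b2 \<notin> (+) a1 ` B"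
  proof
    assume "a2 + b2 \<in> (+) a1 ` B"
    then obtain b where "b \<in> B" "a2 + b2 = a1 + b" by auto
    moreover have "b \<le> b2" using \<open>b \<in> B\<close> assms(2) b2_def by simp
    ultimately show False using lt by simp
  qed
  have "card (insert (a2 + b2) ((+) a1 ` B)) = card B + 1"
    using notin assms(2) by (simp add: card_image)
  moreover have "card (insert (a2 + b2) ((+) a1 ` B)) \<le> card (A + B)"
    using sub finite_sumset[OF assms(1,2)] by (rule card_mono[rotated])
  ultimately show ?thesis by simp
qed

lemma edge_in_V: "graph V E \<Longrightarrow> {u, v} \<in> E \<Longrightarrow> u \<in> V \<and> v \<in> V"
  unfolding graph_def by (metis doubleton_eq_iff)

lemma side:
  assumes g: "graph V E" and k: "k \<ge> 2" and f: "k_uniform_wiasi k V E g"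
    and e: "{u, v} \<in> E"
  shows "(card (g u) = 1) \<noteq> (card (g v) = 1)"
proof -
  have uv: "u \<in> V" "v \<in> V" using edge_in_V[OF g e] by auto
  have fin: "finite (g u)" "finite (g v)" "g u \<noteq> {}" "g v \<noteq> {}"
    using f uv unfolding k_uniform_wiasi_def wiasi_def iasi_def by auto
  have c1: "card (edge_label g u v) = max (card (g u)) (card (g v))"
    and c2: "card (edge_label g u v) = k"
    using f e unfolding k_uniform_wiasi_def wiasi_def by auto
  have p1: "card (g u) \<ge> 1" "card (g v) \<ge> 1" using fin by (simp_all add: Suc_le_eq card_gt_0_iff)
  show ?thesis
  proof
    assume eq: "(card (g u) = 1) = (card (g v) = 1)"
    show False
    proof (cases "card (g u) = 1")
      case True
      then show ?thesis using eq c1 c2 k by simp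
    next
      case False
      hence "card (g u) \<ge> 2" "card (g v) \<ge> 2" using eq p1 by auto
      hence "card (g u + g v) > card (g v)" "card (g v + g u) > card (g u)"
        using sumset_gt fin by auto
      hence "card (edge_label g u v) > max (card (g u)) (card (g v))"
        by (simp add: edge_label_def add.commute)
      thus False using c1 by simp
    qed
  qed
qed

lemma sing_plus_pair: "{x::nat} + {c, c + 1} = {x + c, x + c + 1}"
  by (auto simp: set_plus_def)

lemma pair_plus_sing: "{c, c + 1} + {x::nat} = {x + c, x + c + 1}"
  by (auto simp: set_plus_def)

lemma dec_mod: "(a::nat) < N \<Longrightarrow> (a + N * m) mod N = a"
  by simp

lemma dec_div: "(a::nat) < N \<Longrightarrow> (a + N * m) div N = m"
  by simp

lemma bip_uwiasi:
  fixes V :: "'c set" and E :: "'c set set" and \<sigma> :: "'c \<Rightarrow> bool"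
  assumes fin: "finite V"
    and ends: "\<And>u v. {u, v} \<in> E \<Longrightarrow> u \<in> V \<and> v \<in> V"
    and sep: "\<And>u v. {u, v} \<in> E \<Longrightarrow> \<sigma> u \<noteq> \<sigma> v"
  shows "\<exists>f. k_uniform_wiasi 2 V E f"
proof -
  obtain n :: "'c \<Rightarrow> nat" and N where nN: "n ` V = {i. i < N}" and ninj: "inj_on n V"
    using finite_imp_inj_to_nat_seg[OF fin] by blast
  have nlt: "\<And>v. v \<in> V \<Longrightarrow> n v < N" using nN by auto
  define f where "f p = (if \<sigma> p then {n p} else {N * (n p + 1), N * (n p + 1) + 1})" for p
  define key where "key u v = (if \<sigma> u then n u + N * (n v + 1) else n v + N * (n u + 1))" for u v
  have el: "edge_label f u v = {key u v, key u v + 1}" if "{u, v} \<in> E" for u v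
  proof -
    have "\<sigma> u \<noteq> \<sigma> v" using sep that .
    thus ?thesis
    proof (cases "\<sigma> u")
      case True
      then have "\<not> \<sigma> v" using \<open>\<sigma> u \<noteq> \<sigma> v\<close> by simp
      then show ?thesis using True unfolding edge_label_def f_def key_def
        by (simp only: if_True if_False sing_plus_pair)
    next
      case False
      then have "\<sigma> v" using \<open>\<sigma> u \<noteq> \<sigma> v\<close> by simp
      then show ?thesis using False unfolding edge_label_def f_def key_def
        by (simp only: if_True if_False pair_plus_sing)
    qed
  qed
  have card2: "card (edge_label f u v) = 2" if "{u, v} \<in> E" for u v
    using el[OF that] by simp
  have cardf: "card (f p) = (if \<sigma> p then 1 else 2)" for p by (simp add: f_def)
  have iasi: "iasi V E f"
    unfolding iasi_def
  proof (intro conjI ballI allI impI)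
    fix v assume "v \<in> V" show "finite (f v)" "f v \<noteq> {}" by (auto simp: f_def)
  next
    show "inj_on f V"
    proof (rule inj_onI)
      fix x y assume xy: "x \<in> V" "y \<in> V" "f x = f y"
      have cc: "card (f x) = card (f y)" using xy(3) by (rule arg_cong)
      have "\<sigma> x = \<sigma> y"
      proof (rule ccontr)
        assume "\<sigma> x \<noteq> \<sigma> y"
        then show False using cc unfolding cardf by (cases "\<sigma> x") simp_all
      qed
      have "n x = n y"
      proof (cases "\<sigma> x")
        case True
        then show ?thesis using xy(3) \<open>\<sigma> x = \<sigma> y\<close> by (simp add: f_def)
      next
        case False
        then have "{N * (n x + 1), N * (n x + 1) + 1} = {N * (n y + 1), N * (n y + 1) + 1}"
          using xy(3) \<open>\<sigma> x = \<sigma> y\<close> by (simp add: f_def)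
        then have "N * (n x + 1) = N * (n y + 1)" by (auto simp: doubleton_eq_iff)
        moreover have "N > 0" using nlt[OF xy(1)] by simp
        ultimately show ?thesis by simp
      qed
      thus "x = y" using ninj xy by (meson inj_onD)
    qed
  next
    fix u v u' v'
    assume e1: "{u, v} \<in> E" and e2: "{u', v'} \<in> E" and eq: "edge_label f u v = edge_label f u' v'"
    have "{key u v, key u v + 1} = {key u' v', key u' v' + 1}"
      using eq unfolding el[OF e1] el[OF e2] .
    hence keq: "key u v = key u' v'" by (auto simp: doubleton_eq_iff)
    define a where "a = (if \<sigma> u then u else v)"
    define b where "b = (if \<sigma> u then v else u)"
    define a' where "a' = (if \<sigma> u' then u' else v')"
    define b' where "b' = (if \<sigma> u' then v' else u')"
    have k1: "key u v = n a + N * (n b + 1)" by (simp add: key_def a_def b_def)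
    have k2: "key u' v' = n a' + N * (n b' + 1)" by (simp add: key_def a'_def b'_def)
    have V1: "a \<in> V" "b \<in> V" using ends[OF e1] by (auto simp: a_def b_def)
    have V2: "a' \<in> V" "b' \<in> V" using ends[OF e2] by (auto simp: a'_def b'_def)
    have eqk: "n a + N * (n b + 1) = n a' + N * (n b' + 1)" using keq k1 k2 by simp
    have "n a = (n a + N * (n b + 1)) mod N" by (rule sym, rule dec_mod[OF nlt[OF V1(1)]])
    also have "\<dots> = (n a' + N * (n b' + 1)) mod N" using eqk by (rule arg_cong)
    also have "\<dots> = n a'" by (rule dec_mod[OF nlt[OF V2(1)]])
    finally have na: "n a = n a'" .
    have "n b + 1 = (n a + N * (n b + 1)) div N" by (rule sym, rule dec_div[OF nlt[OF V1(1)]])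
    also have "\<dots> = (n a' + N * (n b' + 1)) div N" using eqk by (rule arg_cong)
    also have "\<dots> = n b' + 1" by (rule dec_div[OF nlt[OF V2(1)]])
    finally have "n b + 1 = n b' + 1" .
    hence "n b = n b'" by simp
    hence "b = b'" "a = a'" using na ninj V1 V2 by (meson inj_onD)+
    have "{u, v} = {a, b}" by (auto simp: a_def b_def)
    moreover have "{u', v'} = {a', b'}" by (auto simp: a'_def b'_def)
    ultimately show "{u, v} = {u', v'}" using \<open>b = b'\<close> \<open>a = a'\<close> by simp
  qed
  have "k_uniform_wiasi 2 V E f"
    unfolding k_uniform_wiasi_def wiasi_def
  proof (intro conjI allI impI iasi)
    fix u v assume e: "{u, v} \<in> E"
    show "card (edge_label f u v) = 2" using card2[OF e] .
    show "card (edge_label f u v) = max (card (f u)) (card (f v))"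
      using card2[OF e] cardf[of u] cardf[of v] sep[OF e] by auto
  qed
  thus ?thesis by blast
qed

theorem mainTheorem14:
  fixes V1 :: "'a set" and E1 :: "'a set set" and V2 :: "'b set" and E2 :: "'b set set"
  assumes "graph V1 E1" and "graph V2 E2"
    and "admits_uwiasi V1 E1" and "admits_uwiasi V2 E2"
  shows "admits_uwiasi (V1 \<times> V2) (cart_edges V1 E1 V2 E2) \<and>
         sparing_number (V1 \<times> V2) (cart_edges V1 E1 V2 E2) = 0"
proof -
  obtain k1 g1 where k1: "k1 \<ge> 2" "k_uniform_wiasi k1 V1 E1 g1"
    using assms(3) unfolding admits_uwiasi_def by blast
  obtain k2 g2 where k2: "k2 \<ge> 2" "k_uniform_wiasi k2 V2 E2 g2"
    using assms(4) unfolding admits_uwiasi_def by blast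
  define \<sigma> where "\<sigma> p = ((card (g1 (fst p)) = 1) = (card (g2 (snd p)) = 1))" for p
  let ?E = "cart_edges V1 E1 V2 E2"
  have fin: "finite (V1 \<times> V2)" using assms(1,2) unfolding graph_def by simp
  have props: "(u \<in> V1 \<times> V2 \<and> v \<in> V1 \<times> V2) \<and> \<sigma> u \<noteq> \<sigma> v" if e: "{u, v} \<in> ?E" for u v
  proof -
    from e consider (A) a b b' where "{u, v} = {(a, b), (a, b')}" "a \<in> V1" "{b, b'} \<in> E2"
      | (B) a a' b where "{u, v} = {(a, b), (a', b)}" "b \<in> V2" "{a, a'} \<in> E1"
      unfolding cart_edges_def by blast
    then show ?thesis
    proof cases
      case A
      have "b \<in> V2" "b' \<in> V2" using edge_in_V[OF assms(2) A(3)] by auto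
      moreover have "(card (g2 b) = 1) \<noteq> (card (g2 b') = 1)" using side[OF assms(2) k2 A(3)] .
      ultimately show ?thesis using A(1,2) by (auto simp: \<sigma>_def doubleton_eq_iff)
    next
      case B
      have "a \<in> V1" "a' \<in> V1" using edge_in_V[OF assms(1) B(3)] by auto
      moreover have "(card (g1 a) = 1) \<noteq> (card (g1 a') = 1)" using side[OF assms(1) k1 B(3)] .
      ultimately show ?thesis using B(1,2) by (auto simp: \<sigma>_def doubleton_eq_iff)
    qed
  qed
  obtain f where f: "k_uniform_wiasi 2 (V1 \<times> V2) ?E f"
    using bip_uwiasi[OF fin, of ?E \<sigma>] props by blast
  have "admits_uwiasi (V1 \<times> V2) ?E" unfolding admits_uwiasi_def using f by blast
  moreover have "mono_edges ?E f = 0"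
  proof -
    have "{e \<in> ?E. \<exists>u v. e = {u, v} \<and> card (edge_label f u v) = 1} = {}"
    proof (rule equals0I)
      fix e assume "e \<in> {e \<in> ?E. \<exists>u v. e = {u, v} \<and> card (edge_label f u v) = 1}"
      then obtain u v where "{u, v} \<in> ?E" "card (edge_label f u v) = 1" by blast
      moreover have "card (edge_label f u v) = 2"
        using f \<open>{u, v} \<in> ?E\<close> unfolding k_uniform_wiasi_def by blast
      ultimately show False by simp
    qed
    thus ?thesis unfolding mono_edges_def by (simp only: card.empty)
  qed
  hence "\<exists>g. wiasi (V1 \<times> V2) ?E g \<and> mono_edges ?E g = 0"
    using f unfolding k_uniform_wiasi_def by blast
  hence "sparing_number (V1 \<times> V2) ?E = 0"
    unfolding sparing_number_def by (rule Least_eq_0)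
  ultimately show ?thesis by simp
qed

end
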